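(* Let $T$ be any finite rooted tree with root $r$ (arbitrary numbers of children), let $(X_v)$ be a tree Markov random field on $T$ over a finite state set $\mathcal S$ whose edge transition matrices all satisfy $\|M_e\|\le\lambda$ for some $0<\lambda<1$, and let $A\subseteq\mathcal S$. Then $$\mathbf V(Z_A)\le\frac12\sum_{v\in V(T)\setminus\{r\}}\Delta(v)^2,\qquad\text{where }\Delta(v)=2\sum_{\ell\in L_v}\lambda^{d(v,\ell)}.$$ More precisely, for every vertex $u$ and every $b\in\mathcal S$, the number $Z_u$ of leaves $\ell$ of the subtree rooted at $u$ with $X_\ell\in A$ satisfies $\mathbf V(Z_u\mid X_u=b)\le\frac12\sum_{v\in V(T_u)\setminus\{u\}}\Delta(v)^2$.
   Context: A tree Markov random field on a rooted tree $T$ with root $r$ over a finite state set $\mathcal S$ assigns to each edge $e=(u,v)$ ($u$ the parent of $v$) an $|\mathcal S|\times|\mathcal S|$ row-stochastic matrix $M_e$; the $\mathcal S$-valued random variables $(X_v)_{v\in V(T)}$ are generated by drawing $X_r$ from a distribution on $\mathcal S$ and then, going down the tree, drawing each $X_v$ independently of everything else given its parent's state, with $\mathbf P[X_v=b\mid X_u=a]=M_e(a,b)$. For a real square matrix $M$, $\|M\|=\max_{x\neq 0,\ x\perp\mathbf 1}\|x^TM\|_1/\|x\|_1$, where $\mathbf 1$ is the all-ones vector. $T_u$ is the subtree rooted at $u$, $L_v$ is the set of leaves of $T_v$, and $d(v,\ell)$ is the number of edges on the path from $v$ to $\ell$. $Z_A$ is the number of leaves $\ell$ of $T$ with $X_\ell\in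 A$; conditioning on $X_u=b$ means running the process on $T_u$ started with state $b$ at $u$. $\mathbf V$ denotes variance. *)

theory Defs
  imports "HOL-Probability.Probability"
begin

text \<open>Vertex set V, root r, parent function par. The edges are (par v, v) for v in V - {r}.
  We record them as the child-to-parent relation.\<close>

definition up_edges :: "'v set \<Rightarrow> 'v \<Rightarrow> ('v \<Rightarrow> 'v) \<Rightarrow> ('v \<times> 'v) set" where
  "up_edges V r par = {(v, par v) | v. v \<in> V - {r}}"

definition rooted_tree :: "'v set \<Rightarrow> 'v \<Rightarrow> ('v \<Rightarrow> 'v) \<Rightarrow> bool" where
  "rooted_tree V r par \<longleftrightarrow> finite V \<and> r \<in> V \<and> (\<forall>v\<in>V - {r}. par v \<in> V)
     \<and> (\<forall>v\<in>V. (v, r) \<in> (up_edges V r par)\<^sup>*)"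

definition subtree :: "'v set \<Rightarrow> 'v \<Rightarrow> ('v \<Rightarrow> 'v) \<Rightarrow> 'v \<Rightarrow> 'v set" where
  "subtree V r par u = {v \<in> V. (v, u) \<in> (up_edges V r par)\<^sup>*}"

definition leaves :: "'v set \<Rightarrow> 'v \<Rightarrow> ('v \<Rightarrow> 'v) \<Rightarrow> 'v \<Rightarrow> 'v set" where
  "leaves V r par u = {l \<in> subtree V r par u. \<not> (\<exists>w\<in>V - {r}. par w = l)}"

definition tdist :: "'v set \<Rightarrow> 'v \<Rightarrow> ('v \<Rightarrow> 'v) \<Rightarrow> 'v \<Rightarrow> 'v \<Rightarrow> nat" where
  "tdist V r par v l = (LEAST k. (l, v) \<in> (up_edges V r par) ^^ k)"

definition row_stochastic :: "('s::finite \<Rightarrow> 's \<Rightarrow> real) \<Rightarrow> bool" where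
  "row_stochastic M \<longleftrightarrow> (\<forall>a b. 0 \<le> M a b) \<and> (\<forall>a. (\<Sum>b\<in>UNIV. M a b) = 1)"

definition mnorm_le :: "('s::finite \<Rightarrow> 's \<Rightarrow> real) \<Rightarrow> real \<Rightarrow> bool" where
  "mnorm_le M lam \<longleftrightarrow> (\<forall>x :: 's \<Rightarrow> real. (\<exists>i. x i \<noteq> 0) \<and> (\<Sum>i\<in>UNIV. x i) = 0 \<longrightarrow>
      (\<Sum>j\<in>UNIV. \<bar>\<Sum>i\<in>UNIV. x i * M i j\<bar>) \<le> lam * (\<Sum>i\<in>UNIV. \<bar>x i\<bar>))"

text \<open>M v is the transition matrix of the edge (par v, v). The joint law of (X_w) for w in T_u
  given X_u = b is the product of the transition probabilities along the edges of T_u;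
  assignments are total functions that are undefined outside T_u.\<close>
definition mrf_density ::
  "'v set \<Rightarrow> 'v \<Rightarrow> ('v \<Rightarrow> 'v) \<Rightarrow> ('v \<Rightarrow> 's \<Rightarrow> 's \<Rightarrow> real) \<Rightarrow> 'v \<Rightarrow> 's \<Rightarrow> ('v \<Rightarrow> 's) \<Rightarrow> real" where
  "mrf_density V r par M u b x =
     (if x u = b \<and> (\<forall>w. w \<notin> subtree V r par u \<longrightarrow> x w = undefined)
      then (\<Prod>w\<in>subtree V r par u - {u}. M w (x (par w)) (x w)) else 0)"

definition mrf_pmf ::
  "'v set \<Rightarrow> 'v \<Rightarrow> ('v \<Rightarrow> 'v) \<Rightarrow> ('v \<Rightarrow> 's \<Rightarrow> 's \<Rightarrow> real) \<Rightarrow> 'v \<Rightarrow> 's \<Rightarrow> ('v \<Rightarrow> 's) pmf" where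
  "mrf_pmf V r par M u b = embed_pmf (mrf_density V r par M u b)"

definition Zcount :: "'v set \<Rightarrow> 'v \<Rightarrow> ('v \<Rightarrow> 'v) \<Rightarrow> 's set \<Rightarrow> 'v \<Rightarrow> ('v \<Rightarrow> 's) \<Rightarrow> real" where
  "Zcount V r par A u x = real (card {l \<in> leaves V r par u. x l \<in> A})"

definition Delta :: "'v set \<Rightarrow> 'v \<Rightarrow> ('v \<Rightarrow> 'v) \<Rightarrow> real \<Rightarrow> 'v \<Rightarrow> real" where
  "Delta V r par lam v = 2 * (\<Sum>l\<in>leaves V r par v. lam ^ tdist V r par v l)"

end

theory Submission
  imports Defs
begin


locale tr =
  fixes V :: "'v set" and r :: 'v and par :: "'v \<Rightarrow> 'v"
  assumes rt: "rooted_tree V r par"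
begin

abbreviation "R \<equiv> up_edges V r par"

lemma finV: "finite V" and rV: "r \<in> V" and parV: "v \<in> V - {r} \<Longrightarrow> par v \<in> V"
  and reach: "v \<in> V \<Longrightarrow> (v, r) \<in> R\<^sup>*"
  using rt unfolding rooted_tree_def by auto

lemma R_iff: "(a, c) \<in> R \<longleftrightarrow> a \<in> V \<and> a \<noteq> r \<and> c = par a"
  by (auto simp: up_edges_def)

lemma R_fun: "(a, c) \<in> R \<Longrightarrow> (a, d) \<in> R \<Longrightarrow> c = d"
  by (auto simp: R_iff)

lemma no_r: "(r, c) \<notin> R"
  by (auto simp: R_iff)

lemma finR: "finite R"
proof -
  have "R = (\<lambda>v. (v, par v)) ` (V - {r})" by (auto simp: up_edges_def)
  thus ?thesis using finV by simp
qed

lemma step_back: "(x, x) \<in> R\<^sup>+ \<Longrightarrow> (x, y) \<in> R \<Longrightarrow> (y, y) \<in> R\<^sup>+"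
proof -
  assume a: "(x, x) \<in> R\<^sup>+" and b: "(x, y) \<in> R"
  have "(y, x) \<in> R\<^sup>*"
    using a
  proof (rule converse_tranclE)
    assume "(x, x) \<in> R"
    have "x = y" using \<open>(x, x) \<in> R\<close> b by (rule R_fun)
    thus ?thesis by simp
  next
    fix z assume "(x, z) \<in> R" "(z, x) \<in> R\<^sup>+"
    have "z = y" using \<open>(x, z) \<in> R\<close> b by (rule R_fun)
    thus ?thesis using \<open>(z, x) \<in> R\<^sup>+\<close> by (simp add: trancl_into_rtrancl)
  qed
  thus ?thesis using b by (rule rtrancl_into_trancl1)
qed

lemma acyc_aux: "(x, r) \<in> R ^^ n \<Longrightarrow> (x, x) \<notin> R\<^sup>+"
proof (induction n arbitrary: x)
  case 0
  then show ?case
  proof (rule relpow_0_E)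
    assume "x = r"
    show "(x, x) \<notin> R\<^sup>+"
    proof
      assume "(x, x) \<in> R\<^sup>+"
      from tranclD[OF this] obtain z where "(x, z) \<in> R" by blast
      with no_r \<open>x = r\<close> show False by blast
    qed
  qed
next
  case (Suc n)
  obtain y where y: "(x, y) \<in> R" "(y, r) \<in> R ^^ n" using relpow_Suc_D2[OF Suc.prems] by blast
  show ?case
  proof
    assume "(x, x) \<in> R\<^sup>+"
    then have "(y, y) \<in> R\<^sup>+" using y(1) by (rule step_back)
    thus False using Suc.IH[OF y(2)] by simp
  qed
qed

lemma acyc: "(x, x) \<notin> R\<^sup>+"
proof
  assume a: "(x, x) \<in> R\<^sup>+"
  from tranclD[OF a] obtain y where "(x, y) \<in> R" by blast
  then have "x \<in> V" by (simp add: R_iff)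
  from rtrancl_imp_relpow[OF reach[OF this]] obtain n where "(x, r) \<in> R ^^ n" by blast
  thus False using acyc_aux[of x n] a by simp
qed

lemma acyclicR: "acyclic R" using acyc by (simp add: acyclic_def)

lemma wfR: "wf R" using finR acyclicR by (rule finite_acyclic_wf)

lemma chain: "(a, c) \<in> R\<^sup>* \<Longrightarrow> (a, d) \<in> R\<^sup>* \<Longrightarrow> (c, d) \<in> R\<^sup>* \<or> (d, c) \<in> R\<^sup>*"
proof (induction rule: rtrancl_induct)
  case base thus ?case by simp
next
  case (step y z)
  from step.IH[OF step.prems] show ?case
  proof
    assume "(d, y) \<in> R\<^sup>*"
    have "(d, z) \<in> R\<^sup>*" using \<open>(d, y) \<in> R\<^sup>*\<close> step.hyps(2) by (rule rtrancl.rtrancl_into_rtrancl)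
    thus ?thesis by (rule disjI2)
  next
    assume "(y, d) \<in> R\<^sup>*"
    thus ?thesis
    proof (rule converse_rtranclE)
      assume "y = d"
      have "(d, z) \<in> R\<^sup>*" using step.hyps(2) \<open>y = d\<close> by (simp add: r_into_rtrancl)
      thus ?thesis by (rule disjI2)
    next
      fix z' assume "(y, z') \<in> R" "(z', d) \<in> R\<^sup>*"
      have "z' = z" using \<open>(y, z') \<in> R\<close> step.hyps(2) by (rule R_fun)
      thus ?thesis using \<open>(z', d) \<in> R\<^sup>*\<close> by simp
    qed
  qed
qed

lemma sub_not_r: "v \<in> subtree V r par u \<Longrightarrow> v \<noteq> u \<Longrightarrow> v \<in> V - {r}"
proof -
  assume a: "v \<in> subtree V r par u" "v \<noteq> u"
  then have v: "v \<in> V" "(v, u) \<in> R\<^sup>*" unfolding subtree_def by auto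
  have "v \<noteq> r"
  proof
    assume "v = r"
    with v(2) have "(r, u) \<in> R\<^sup>*" by simp
    thus False
    proof (rule converse_rtranclE)
      assume "r = u" thus False using a \<open>v = r\<close> by simp
    next
      fix y assume "(r, y) \<in> R" thus False using no_r by blast
    qed
  qed
  thus ?thesis using v by simp
qed

lemma sub_V: "subtree V r par u \<subseteq> V" by (auto simp: subtree_def)

lemma leaves_sub: "c \<in> V - {r} \<Longrightarrow> leaves V r par c \<subseteq> leaves V r par (par c)"
proof
  fix l assume c: "c \<in> V - {r}" and l: "l \<in> leaves V r par c"
  have "(c, par c) \<in> R" using c by (simp add: R_iff)
  moreover have "(l, c) \<in> R\<^sup>*" "l \<in> V" using l unfolding leaves_def subtree_def by auto
  ultimately have "(l, par c) \<in> R\<^sup>*" by (meson rtrancl.rtrancl_into_rtrancl)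
  thus "l \<in> leaves V r par (par c)" using l \<open>l \<in> V\<close> unfolding leaves_def subtree_def by auto
qed

lemma subtree_disj: "c \<in> V - {r} \<Longrightarrow> c' \<in> V - {r} \<Longrightarrow> par c = par c' \<Longrightarrow> c \<noteq> c'
   \<Longrightarrow> subtree V r par c \<inter> subtree V r par c' = {}"
proof (rule ccontr)
  assume c: "c \<in> V - {r}" "c' \<in> V - {r}" "par c = par c'" "c \<noteq> c'"
    and "subtree V r par c \<inter> subtree V r par c' \<noteq> {}"
  then obtain l where "(l, c) \<in> R\<^sup>*" "(l, c') \<in> R\<^sup>*" unfolding subtree_def by auto
  then have ch: "(c, c') \<in> R\<^sup>* \<or> (c', c) \<in> R\<^sup>*" by (rule chain)
  have gen: "False" if "a \<in> V - {r}" "a' \<in> V - {r}" "par a = par a'" "a \<noteq> a'" "(a, a') \<in> R\<^sup>*" for a a'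
  proof -
    from that(5) have "(par a, a') \<in> R\<^sup>*"
    proof (rule converse_rtranclE)
      assume "a = a'" thus ?thesis using that(4) by simp
    next
      fix z assume "(a, z) \<in> R" "(z, a') \<in> R\<^sup>*" thus ?thesis by (simp add: R_iff)
    qed
    moreover have "(a', par a) \<in> R" using that by (simp add: R_iff)
    ultimately have "(par a, par a) \<in> R\<^sup>+" by (rule rtrancl_into_trancl1)
    thus False using acyc by blast
  qed
  show False using ch
  proof
    assume "(c, c') \<in> R\<^sup>*" thus False using gen[of c c'] c by blast
  next
    assume "(c', c) \<in> R\<^sup>*" thus False using gen[of c' c] c by auto
  qed
qed

lemma tdist_ok: "l \<in> subtree V r par c \<Longrightarrow> (l, c) \<in> R ^^ tdist V r par c l"
proof -
  assume "l \<in> subtree V r par c"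
  then have "(l, c) \<in> R\<^sup>*" unfolding subtree_def by simp
  from rtrancl_imp_relpow[OF this] obtain n where "(l, c) \<in> R ^^ n" by blast
  thus ?thesis unfolding tdist_def by (rule LeastI)
qed

lemma tdist_par: "l \<in> subtree V r par c \<Longrightarrow> c \<in> V - {r} \<Longrightarrow>
   tdist V r par (par c) l \<le> Suc (tdist V r par c l)"
proof -
  assume a: "l \<in> subtree V r par c" "c \<in> V - {r}"
  have "(l, par c) \<in> R ^^ Suc (tdist V r par c l)"
  proof -
    have "(c, par c) \<in> R" using a(2) by (simp add: R_iff)
    thus ?thesis using tdist_ok[OF a(1)] by (simp only: relpow.simps(2)) (rule relcompI)
  qed
  thus ?thesis unfolding tdist_def by (rule Least_le)
qed

lemma tdist_self: "tdist V r par v v = 0"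
  unfolding tdist_def by simp

lemma leaves_fin: "finite (leaves V r par v)"
  by (rule finite_subset[OF _ finV]) (auto simp: leaves_def subtree_def)

end



context tr begin

definition D :: "real \<Rightarrow> 'v \<Rightarrow> real" where
  "D lam v = (\<Sum>l\<in>leaves V r par v. lam ^ tdist V r par v l)"

lemma D_nonneg: "0 \<le> lam \<Longrightarrow> 0 \<le> D lam v"
  unfolding D_def by (auto intro: sum_nonneg)

lemma D_children:
  assumes lam: "0 < lam" "lam < 1" and w: "w \<in> V" and C: "C \<subseteq> {c \<in> V - {r}. par c = w}"
  shows "lam * (\<Sum>c\<in>C. D lam c) \<le> D lam w"
proof -
  have finC: "finite C" using C finV by (auto intro: finite_subset)
  have "lam * (\<Sum>c\<in>C. D lam c) = (\<Sum>c\<in>C. \<Sum>l\<in>leaves V r par c. lam ^ Suc (tdist V r par c l))"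
    unfolding D_def by (simp add: sum_distrib_left)
  also have "\<dots> \<le> (\<Sum>c\<in>C. \<Sum>l\<in>leaves V r par c. lam ^ tdist V r par w l)"
  proof (intro sum_mono)
    fix c l assume c: "c \<in> C" and l: "l \<in> leaves V r par c"
    have "tdist V r par (par c) l \<le> Suc (tdist V r par c l)"
      using c C l by (intro tdist_par) (auto simp: leaves_def)
    moreover have "par c = w" using c C by auto
    ultimately show "lam ^ Suc (tdist V r par c l) \<le> lam ^ tdist V r par w l"
      using lam by (intro power_decreasing) auto
  qed
  also have "\<dots> = (\<Sum>l\<in>(\<Union>c\<in>C. leaves V r par c). lam ^ tdist V r par w l)"
  proof (rule sum.UNION_disjoint[symmetric])
    show "finite C" by fact
    show "\<forall>i\<in>C. finite (leaves V r par i)" using leaves_fin by blast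
    show "\<forall>i\<in>C. \<forall>j\<in>C. i \<noteq> j \<longrightarrow> leaves V r par i \<inter> leaves V r par j = {}"
    proof (intro ballI impI)
      fix i j assume "i \<in> C" "j \<in> C" "i \<noteq> j"
      then have "subtree V r par i \<inter> subtree V r par j = {}"
        using C by (intro subtree_disj) auto
      thus "leaves V r par i \<inter> leaves V r par j = {}" unfolding leaves_def by auto
    qed
  qed
  also have "\<dots> \<le> D lam w"
    unfolding D_def
  proof (rule sum_mono2[OF leaves_fin])
    show "(\<Union>c\<in>C. leaves V r par c) \<subseteq> leaves V r par w"
      using C leaves_sub by fastforce
  qed (use lam in auto)
  finally show ?thesis .
qed

lemma D_leaf: "w \<in> leaves V r par u \<Longrightarrow> 0 < lam \<Longrightarrow> 1 \<le> D lam w"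
proof -
  assume a: "w \<in> leaves V r par u" and lam: "0 < lam"
  have wl: "w \<in> leaves V r par w" using a unfolding leaves_def subtree_def by auto
  have "lam ^ tdist V r par w w \<le> D lam w"
    unfolding D_def using lam by (intro member_le_sum[OF wl]) (auto intro: leaves_fin)
  thus ?thesis by (simp add: tdist_self)
qed

end



definition oscle :: "('s \<Rightarrow> real) \<Rightarrow> real \<Rightarrow> bool" where
  "oscle f k \<longleftrightarrow> (\<forall>s s'. \<bar>f s - f s'\<bar> \<le> k)"

lemma oscle_nonneg: "oscle f k \<Longrightarrow> 0 \<le> k"
  unfolding oscle_def by (metis abs_ge_zero order_trans)

lemma oscle_add: "oscle f k \<Longrightarrow> oscle g k' \<Longrightarrow> oscle (\<lambda>s. f s + g s) (k + k')"
  unfolding oscle_def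
proof (intro allI)
  fix s s'
  assume a: "\<forall>s s'. \<bar>f s - f s'\<bar> \<le> k" "\<forall>s s'. \<bar>g s - g s'\<bar> \<le> k'"
  have "\<bar>f s + g s - (f s' + g s')\<bar> \<le> \<bar>f s - f s'\<bar> + \<bar>g s - g s'\<bar>"
    using abs_triangle_ineq[of "f s - f s'" "g s - g s'"] by (simp add: algebra_simps)
  thus "\<bar>f s + g s - (f s' + g s')\<bar> \<le> k + k'" using a by (meson add_mono order_trans)
qed

lemma oscle_mono: "oscle f k \<Longrightarrow> k \<le> k' \<Longrightarrow> oscle f k'"
  unfolding oscle_def by (meson order_trans)

lemma oscle_mid:
  fixes f :: "'s::finite \<Rightarrow> real"
  assumes "oscle f k" shows "\<exists>c. \<forall>s. \<bar>f s - c\<bar> \<le> k / 2"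
proof -
  have ne: "range f \<noteq> {}" by simp
  have fin: "finite (range f)" by simp
  from Max_in[OF fin ne] obtain j1 where j1: "Max (range f) = f j1" by blast
  from Min_in[OF fin ne] obtain j2 where j2: "Min (range f) = f j2" by blast
  have "\<bar>f j1 - f j2\<bar> \<le> k" using assms unfolding oscle_def by blast
  moreover have "f s \<le> f j1" "f j2 \<le> f s" for s
    using Max_ge[OF fin, of "f s"] Min_le[OF fin, of "f s"] j1 j2 by auto
  ultimately have "\<forall>s. \<bar>f s - (f j1 + f j2) / 2\<bar> \<le> k / 2"
  proof (intro allI)
    fix s
    assume a: "\<bar>f j1 - f j2\<bar> \<le> k" and b: "\<And>s. f s \<le> f j1" "\<And>s. f j2 \<le> f s"
    have "f s \<le> f j1" "f j2 \<le> f s" "f j1 - f j2 \<le> k" using a b[of s] by auto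
    thus "\<bar>f s - (f j1 + f j2) / 2\<bar> \<le> k / 2" unfolding abs_le_iff by (intro conjI; simp add: field_simps)
  qed
  thus ?thesis by blast
qed

lemma osc_M:
  fixes M :: "'s::finite \<Rightarrow> 's \<Rightarrow> real"
  assumes st: "row_stochastic M" and mn: "mnorm_le M lam" and og: "oscle g k" and lam0: "0 \<le> lam"
  shows "oscle (\<lambda>s. \<Sum>t\<in>UNIV. M s t * g t) (lam * k)"
  unfolding oscle_def
proof (intro allI)
  fix s s'
  obtain c where c: "\<And>j. \<bar>g j - c\<bar> \<le> k / 2" using oscle_mid[OF og] by blast
  have k0: "0 \<le> k" using oscle_nonneg[OF og] .
  show "\<bar>(\<Sum>t\<in>UNIV. M s t * g t) - (\<Sum>t\<in>UNIV. M s' t * g t)\<bar> \<le> lam * k"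
  proof (cases "s = s'")
    case True
    thus ?thesis using True k0 lam0 by simp
  next
    case False
    define x :: "'s \<Rightarrow> real" where "x = (\<lambda>i. (if i = s then 1 else 0) - (if i = s' then 1 else 0))"
    have xs: "x s \<noteq> 0" using False by (simp add: x_def)
    have sx: "(\<Sum>i\<in>UNIV. x i) = 0" by (simp add: x_def sum_subtractf)
    have ax: "(\<Sum>i\<in>UNIV. \<bar>x i\<bar>) = 2"
    proof -
      have "(\<Sum>i\<in>UNIV. \<bar>x i\<bar>) = (\<Sum>i\<in>UNIV. (if i = s then 1 else 0) + (if i = s' then 1 else 0))"
        using False by (intro sum.cong) (auto simp: x_def)
      thus ?thesis by (simp add: sum.distrib)
    qed
    define y where "y j = M s j - M s' j" for j
    have xy: "(\<Sum>i\<in>UNIV. x i * M i j) = y j" for j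
    proof -
      have "(\<Sum>i\<in>UNIV. x i * M i j) = (\<Sum>i\<in>UNIV. (if i = s then M i j else 0) - (if i = s' then M i j else 0))"
        by (intro sum.cong) (auto simp: x_def)
      thus ?thesis by (simp add: sum_subtractf y_def)
    qed
    have ybound: "(\<Sum>j\<in>UNIV. \<bar>y j\<bar>) \<le> lam * 2"
    proof -
      have "(\<Sum>j\<in>UNIV. \<bar>\<Sum>i\<in>UNIV. x i * M i j\<bar>) \<le> lam * (\<Sum>i\<in>UNIV. \<bar>x i\<bar>)"
        using mn xs sx unfolding mnorm_le_def by blast
      thus ?thesis by (simp only: xy ax)
    qed
    have sy: "(\<Sum>j\<in>UNIV. y j) = 0" using st by (simp add: y_def sum_subtractf row_stochastic_def)
    have "(\<Sum>t\<in>UNIV. M s t * g t) - (\<Sum>t\<in>UNIV. M s' t * g t) = (\<Sum>j\<in>UNIV. y j * g j)"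
      by (simp add: y_def left_diff_distrib sum_subtractf)
    also have "\<dots> = (\<Sum>j\<in>UNIV. y j * (g j - c))"
      using sy by (simp add: right_diff_distrib sum_subtractf sum_distrib_right[symmetric])
    finally have eq: "(\<Sum>t\<in>UNIV. M s t * g t) - (\<Sum>t\<in>UNIV. M s' t * g t) = (\<Sum>j\<in>UNIV. y j * (g j - c))" .
    have "\<bar>\<Sum>j\<in>UNIV. y j * (g j - c)\<bar> \<le> (\<Sum>j\<in>UNIV. \<bar>y j\<bar> * (k / 2))"
      by (rule order_trans[OF sum_abs], rule sum_mono, simp only: abs_mult, rule mult_left_mono[OF c abs_ge_zero])
    also have "\<dots> = (\<Sum>j\<in>UNIV. \<bar>y j\<bar>) * (k / 2)" by (simp add: sum_distrib_right)
    also have "\<dots> \<le> lam * 2 * (k / 2)" using ybound k0 by (intro mult_right_mono) auto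
    finally show ?thesis using eq by simp
  qed
qed




lemma var_step:
  fixes m g :: "'s::finite \<Rightarrow> real"
  assumes m1: "(\<Sum>t\<in>UNIV. m t) = 1" and m0: "\<And>t. 0 \<le> m t"
    and og: "oscle g k"
  shows "(\<Sum>t\<in>UNIV. m t * (a + g t - mu)\<^sup>2)
     \<le> (a + (\<Sum>t\<in>UNIV. m t * g t) - mu)\<^sup>2 + k\<^sup>2"
proof -
  define hh where "hh = (\<Sum>t\<in>UNIV. m t * g t)"
  define z where "z = a + hh - mu"
  have d0: "(\<Sum>t\<in>UNIV. m t * (g t - hh)) = 0"
    by (simp add: right_diff_distrib sum_subtractf hh_def sum_distrib_right[symmetric] m1)
  have "(\<Sum>t\<in>UNIV. m t * (a + g t - mu)\<^sup>2)
      = (\<Sum>t\<in>UNIV. m t * z\<^sup>2 + 2 * z * (m t * (g t - hh)) + m t * (g t - hh)\<^sup>2)"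
    by (intro sum.cong) (auto simp: z_def power2_eq_square algebra_simps)
  also have "\<dots> = z\<^sup>2 + (\<Sum>t\<in>UNIV. m t * (g t - hh)\<^sup>2)"
    by (simp add: sum.distrib sum_distrib_right[symmetric] sum_distrib_left[symmetric] m1 d0)
  also have "(\<Sum>t\<in>UNIV. m t * (g t - hh)\<^sup>2) \<le> (\<Sum>t\<in>UNIV. m t * k\<^sup>2)"
  proof (intro sum_mono mult_left_mono m0)
    fix t
    have "g t - hh = (\<Sum>t'\<in>UNIV. m t' * (g t - g t'))"
      by (simp add: right_diff_distrib sum_subtractf hh_def sum_distrib_right[symmetric] m1)
    also have "\<bar>\<dots>\<bar> \<le> (\<Sum>t'\<in>UNIV. m t' * k)"
      by (rule order_trans[OF sum_abs])
         (use og m0 in \<open>auto intro!: sum_mono mult_left_mono simp: abs_mult oscle_def\<close>)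
    also have "\<dots> = k" by (simp add: sum_distrib_right[symmetric] m1)
    finally have "\<bar>g t - hh\<bar> \<le> k" .
    thus "(g t - hh)\<^sup>2 \<le> k\<^sup>2" by (metis abs_ge_zero power2_abs power_mono)
  qed
  also have "(\<Sum>t\<in>UNIV. m t * k\<^sup>2) = k\<^sup>2" by (simp add: sum_distrib_right[symmetric] m1)
  finally show ?thesis by (simp add: z_def hh_def)
qed




locale mrf = tr V r par for V :: "'v set" and r :: 'v and par :: "'v \<Rightarrow> 'v" +
  fixes M :: "'v \<Rightarrow> 's::finite \<Rightarrow> 's \<Rightarrow> real" and lam :: real and u :: 'v and b :: 's
  assumes stoch: "\<forall>v\<in>V - {r}. row_stochastic (M v)"
    and lam0: "0 < lam" and lam1: "lam < 1"
    and mn: "\<forall>v\<in>V - {r}. mnorm_le (M v) lam" and uV: "u \<in> V"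
begin

definition closed :: "'v set \<Rightarrow> bool" where
  "closed S \<longleftrightarrow> u \<in> S \<and> S \<subseteq> subtree V r par u \<and> (\<forall>w\<in>S - {u}. par w \<in> S)"

definition Om :: "'v set \<Rightarrow> ('v \<Rightarrow> 's) set" where
  "Om S = PiE S (\<lambda>_. UNIV)"

definition P :: "'v set \<Rightarrow> ('v \<Rightarrow> 's) \<Rightarrow> real" where
  "P S x = (if x u = b then \<Prod>w\<in>S - {u}. M w (x (par w)) (x w) else 0)"

definition FF :: "('v \<Rightarrow> 's \<Rightarrow> real) \<Rightarrow> 'v set \<Rightarrow> ('v \<Rightarrow> 's) \<Rightarrow> real" where
  "FF G S x = (\<Sum>v\<in>S. G v (x v))"

definition K :: "'v set \<Rightarrow> 'v \<Rightarrow> real" where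
  "K S w = D lam w - lam * (\<Sum>c\<in>{c \<in> S - {u}. par c = w}. D lam c)"

lemma closed_fin: "closed S \<Longrightarrow> finite S"
proof -
  assume "closed S"
  then have "S \<subseteq> subtree V r par u" by (simp add: closed_def)
  from this sub_V[of u] have "S \<subseteq> V" by (rule order_trans)
  thus ?thesis using finV by (rule finite_subset)
qed

lemma closed_nr: "closed S \<Longrightarrow> w \<in> S - {u} \<Longrightarrow> w \<in> V - {r}"
proof -
  assume a: "closed S" "w \<in> S - {u}"
  then have "w \<in> subtree V r par u" "w \<noteq> u" by (auto simp: closed_def)
  thus ?thesis by (rule sub_not_r)
qed

lemma closed_induct:
  assumes "closed S" and base: "Q {u}"
    and step: "\<And>S w. closed S \<Longrightarrow> Q S \<Longrightarrow> w \<notin> S \<Longrightarrow> w \<in> subtree V r par u - {u}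
        \<Longrightarrow> par w \<in> S \<Longrightarrow> Q (insert w S)"
  shows "Q S"
  using assms(1)
proof (induction "card S" arbitrary: S rule: less_induct)
  case less
  show ?case
  proof (cases "S = {u}")
    case True thus ?thesis using base by simp
  next
    case False
    with less.prems have ne: "S - {u} \<noteq> {}" unfolding closed_def by auto
    obtain w where w: "w \<in> S - {u}" and wmin: "\<And>y. (y, w) \<in> R \<Longrightarrow> y \<notin> S - {u}"
      using wfE_min'[OF wfR ne] by metis
    define S' where "S' = S - {w}"
    have wnr: "w \<in> V - {r}" using closed_nr[OF less.prems w] .
    have cl: "closed S'"
      unfolding closed_def S'_def
    proof (intro conjI ballI)
      show "u \<in> S - {w}" using less.prems w unfolding closed_def by auto
      show "S - {w} \<subseteq> subtree V r par u" using less.prems unfolding closed_def by auto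
      fix v assume v: "v \<in> S - {w} - {u}"
      have "par v \<in> S" using less.prems v unfolding closed_def by auto
      moreover have "v \<in> V - {r}" using closed_nr[OF less.prems] v by auto
      then have "(v, par v) \<in> R" by (simp add: R_iff)
      then have "par v \<noteq> w" using wmin v by auto
      ultimately show "par v \<in> S - {w}" by auto
    qed
    have "card S' < card S" unfolding S'_def using w closed_fin[OF less.prems]
      by (intro card_Diff1_less) auto
    from less.hyps[OF this cl] have QS': "Q S'" .
    have pw: "par w \<in> S'"
    proof -
      have "par w \<in> S" using less.prems w unfolding closed_def by auto
      moreover have "(w, par w) \<in> R" using wnr by (simp add: R_iff)
      then have "par w \<noteq> w" using acyc[of w] r_into_trancl[of w "par w" R] by auto
      ultimately show ?thesis by (simp add: S'_def)
    qed
    have wsub: "w \<in> subtree V r par u - {u}" using w less.prems unfolding closed_def by auto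
    have "Q (insert w S')" by (rule step[OF cl QS' _ wsub pw]) (simp add: S'_def)
    moreover have "insert w S' = S" using w by (auto simp: S'_def)
    ultimately show ?thesis by simp
  qed
qed

lemma sum_Om_insert:
  assumes "w \<notin> S" "finite S"
  shows "(\<Sum>x\<in>Om (insert w S). f x) = (\<Sum>y\<in>Om S. \<Sum>t\<in>UNIV. f (y(w := t)))"
proof -
  have "(\<Sum>x\<in>Om (insert w S). f x) = (\<Sum>(t, y)\<in>UNIV \<times> Om S. f (y(w := t)))"
    unfolding Om_def PiE_insert_eq
    by (subst sum.reindex[OF inj_combinator[OF assms(1)]]) (simp add: case_prod_beta)
  also have "\<dots> = (\<Sum>t\<in>UNIV. \<Sum>y\<in>Om S. f (y(w := t)))"
    by (simp add: sum.cartesian_product)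
  also have "\<dots> = (\<Sum>y\<in>Om S. \<Sum>t\<in>UNIV. f (y(w := t)))"
    by (rule sum.swap)
  finally show ?thesis .
qed

lemma sum_Om_u: "(\<Sum>x\<in>Om {u}. f x) = (\<Sum>t\<in>UNIV. f (\<lambda>a. if a = u then t else undefined))"
proof -
  have e: "Om {} = {\<lambda>_. undefined}" by (simp add: Om_def)
  have "(\<Sum>x\<in>Om {u}. f x) = (\<Sum>y\<in>Om {}. \<Sum>t\<in>UNIV. f (y(u := t)))"
    by (rule sum_Om_insert) auto
  also have "\<dots> = (\<Sum>t\<in>UNIV. f (\<lambda>a. if a = u then t else undefined))"
    unfolding e by simp
  finally show ?thesis .
qed

lemma P_insert:
  assumes "closed S" "w \<notin> S" "w \<in> subtree V r par u - {u}" "par w \<in> S"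
  shows "P (insert w S) (y(w := t)) = P S y * M w (y (par w)) t"
proof -
  have wu: "w \<noteq> u" using assms by auto
  have pw: "par w \<noteq> w" using assms by auto
  have e: "insert w S - {u} = insert w (S - {u})" using wu by auto
  have fin: "finite (S - {u})" using closed_fin[OF assms(1)] by simp
  have "(\<Prod>v\<in>S - {u}. M v ((y(w := t)) (par v)) ((y(w := t)) v)) = (\<Prod>v\<in>S - {u}. M v (y (par v)) (y v))"
  proof (rule prod.cong)
    fix v assume v: "v \<in> S - {u}"
    then have "par v \<in> S" "v \<noteq> w" using assms(1,2) unfolding closed_def by auto
    thus "M v ((y(w := t)) (par v)) ((y(w := t)) v) = M v (y (par v)) (y v)" using assms(2) by auto
  qed simp
  thus ?thesis unfolding P_def using wu pw assms(2) fin e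
    by (simp add: prod.insert mult.commute)
qed

lemma FF_insert: "w \<notin> S \<Longrightarrow> finite S \<Longrightarrow> FF G (insert w S) (y(w := t)) = FF G S y + G w t"
  unfolding FF_def by (auto intro!: sum.cong simp: add.commute)

lemma P_nonneg: "closed S \<Longrightarrow> 0 \<le> P S x"
proof -
  assume cS: "closed S"
  have "0 \<le> M w (x (par w)) (x w)" if "w \<in> S - {u}" for w
    using stoch closed_nr[OF cS that] unfolding row_stochastic_def by blast
  thus ?thesis unfolding P_def by (auto intro: prod_nonneg)
qed

lemma P_sum: assumes "closed S" shows "(\<Sum>x\<in>Om S. P S x) = 1"
proof (rule closed_induct[OF assms, where Q="\<lambda>S. (\<Sum>x\<in>Om S. P S x) = 1"])
  show "(\<Sum>x\<in>Om {u}. P {u} x) = 1" by (simp add: sum_Om_u P_def)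
next
  fix S w assume cS: "closed S" and IH: "(\<Sum>x\<in>Om S. P S x) = 1" and wS: "w \<notin> S"
    and wsub: "w \<in> subtree V r par u - {u}" and pw: "par w \<in> S"
  have wnr: "w \<in> V - {r}" using wsub sub_not_r by blast
  have "(\<Sum>x\<in>Om (insert w S). P (insert w S) x) = (\<Sum>y\<in>Om S. \<Sum>t\<in>UNIV. P (insert w S) (y(w := t)))"
    by (rule sum_Om_insert[OF wS closed_fin[OF cS]])
  also have "\<dots> = (\<Sum>y\<in>Om S. \<Sum>t\<in>UNIV. P S y * M w (y (par w)) t)"
    by (simp only: P_insert[OF cS wS wsub pw])
  also have "\<dots> = (\<Sum>y\<in>Om S. P S y * (\<Sum>t\<in>UNIV. M w (y (par w)) t))"
    by (simp add: sum_distrib_left)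
  also have "\<dots> = (\<Sum>y\<in>Om S. P S y)" using stoch wnr by (simp add: row_stochastic_def)
  finally show "(\<Sum>x\<in>Om (insert w S). P (insert w S) x) = 1" using IH by simp
qed

end



context mrf begin

definition Ex :: "'v set \<Rightarrow> ('v \<Rightarrow> 's \<Rightarrow> real) \<Rightarrow> real" where
  "Ex S G = (\<Sum>x\<in>Om S. P S x * FF G S x)"

definition Var :: "'v set \<Rightarrow> ('v \<Rightarrow> 's \<Rightarrow> real) \<Rightarrow> real" where
  "Var S G = (\<Sum>x\<in>Om S. P S x * (FF G S x - Ex S G)\<^sup>2)"

lemma sum_ind: fixes g :: "'s \<Rightarrow> real" shows "(\<Sum>t\<in>UNIV. (if t = c then (1::real) else 0) * g t) = g c"
proof -
  have "(\<Sum>t\<in>UNIV. (if t = c then (1::real) else 0) * g t) = (\<Sum>t\<in>UNIV. if t = c then g t else 0)"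
    by (intro sum.cong) auto
  also have "\<dots> = g c" by simp
  finally show ?thesis .
qed

lemma var_base: "Var {u} G = 0"
proof -
  have P1: "P {u} x = (if x u = b then 1 else 0)" for x by (simp add: P_def)
  have F1: "FF G {u} x = G u (x u)" for x by (simp add: FF_def)
  have e: "Ex {u} G = G u b"
    unfolding Ex_def sum_Om_u P1 F1 by (simp add: sum_ind)
  show ?thesis unfolding Var_def sum_Om_u e P1 F1 by (simp add: sum_ind)
qed

lemma var_bound:
  assumes "closed S"
  shows "\<forall>G::'v \<Rightarrow> 's \<Rightarrow> real. (\<forall>v\<in>S. oscle (G v) (K S v)) \<longrightarrow> Var S G \<le> (\<Sum>v\<in>S - {u}. (D lam v)\<^sup>2)"
proof (rule closed_induct[OF assms, where Q="\<lambda>S. \<forall>G::'v \<Rightarrow> 's \<Rightarrow> real. (\<forall>v\<in>S. oscle (G v) (K S v)) \<longrightarrow> Var S G \<le> (\<Sum>v\<in>S - {u}. (D lam v)\<^sup>2)"])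
  show "\<forall>G::'v \<Rightarrow> 's \<Rightarrow> real. (\<forall>v\<in>{u}. oscle (G v) (K {u} v)) \<longrightarrow> Var {u} G \<le> (\<Sum>v\<in>{u} - {u}. (D lam v)\<^sup>2)"
    by (simp add: var_base)
next
  fix S w assume cS: "closed S"
    and IH: "\<forall>G::'v \<Rightarrow> 's \<Rightarrow> real. (\<forall>v\<in>S. oscle (G v) (K S v)) \<longrightarrow> Var S G \<le> (\<Sum>v\<in>S - {u}. (D lam v)\<^sup>2)"
    and wS: "w \<notin> S" and wsub: "w \<in> subtree V r par u - {u}" and pS: "par w \<in> S"
  show "\<forall>G::'v \<Rightarrow> 's \<Rightarrow> real. (\<forall>v\<in>insert w S. oscle (G v) (K (insert w S) v)) \<longrightarrow>
          Var (insert w S) G \<le> (\<Sum>v\<in>insert w S - {u}. (D lam v)\<^sup>2)"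
  proof (intro allI impI)
    fix G :: "'v \<Rightarrow> 's \<Rightarrow> real" assume osc: "\<forall>v\<in>insert w S. oscle (G v) (K (insert w S) v)"
    define p where "p = par w"
    have wnr: "w \<in> V - {r}" using wsub sub_not_r by blast
    have finS: "finite S" using closed_fin[OF cS] .
    have pS': "p \<in> S" using pS by (simp add: p_def)
    have pw: "p \<noteq> w" using pS' wS by auto
    have wu: "w \<noteq> u" using wsub by simp
    have parS: "par c \<in> S" if "c \<in> S - {u}" for c using cS that unfolding closed_def by blast
    define h where "h s = (\<Sum>t\<in>UNIV. M w s t * G w t)" for s
    define G' where "G' v s = G v s + (if v = p then h s else 0)" for v s
    have Kw: "K (insert w S) w = D lam w"
    proof -
      have e: "{c \<in> insert w S - {u}. par c = w} = {}"
        using parS wS pw p_def by fastforce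
      show ?thesis unfolding K_def e by simp
    qed
    have KS: "K S v = K (insert w S) v + (if v = p then lam * D lam w else 0)" if "v \<in> S" for v
    proof (cases "v = p")
      case True
      have "{c \<in> insert w S - {u}. par c = v} = insert w {c \<in> S - {u}. par c = v}"
        using True wu p_def by auto
      moreover have "finite {c \<in> S - {u}. par c = v}" using finS by simp
      moreover have "w \<notin> {c \<in> S - {u}. par c = v}" using wS by simp
      ultimately show ?thesis using True by (simp add: K_def algebra_simps)
    next
      case False
      have "{c \<in> insert w S - {u}. par c = v} = {c \<in> S - {u}. par c = v}"
        using False p_def by auto
      thus ?thesis using False by (simp add: K_def)
    qed
    have st: "row_stochastic (M w)" and mw: "mnorm_le (M w) lam" using stoch mn wnr by auto
    have oscw: "oscle (G w) (D lam w)" using osc Kw by auto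
    have osch: "oscle h (lam * D lam w)"
      unfolding h_def by (rule osc_M[OF st mw oscw]) (use lam0 in simp)
    have oscG': "\<forall>v\<in>S. oscle (G' v) (K S v)"
    proof
      fix v assume vS: "v \<in> S"
      have ov: "oscle (G v) (K (insert w S) v)" using osc vS by auto
      show "oscle (G' v) (K S v)"
      proof (cases "v = p")
        case True
        have "oscle (\<lambda>s. G v s + h s) (K (insert w S) v + lam * D lam w)"
          by (rule oscle_add[OF ov osch])
        moreover have "G' v = (\<lambda>s. G v s + h s)" using True by (simp add: G'_def fun_eq_iff)
        ultimately show ?thesis using KS[OF vS] True by simp
      next
        case False
        have "G' v = G v" using False by (simp add: G'_def fun_eq_iff)
        thus ?thesis using KS[OF vS] False ov by simp
      qed
    qed
    have IH': "Var S G' \<le> (\<Sum>v\<in>S - {u}. (D lam v)\<^sup>2)" using IH oscG' by blast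
    have FF': "FF G' S y = FF G S y + h (y p)" for y
    proof -
      have "FF G' S y = FF G S y + (\<Sum>v\<in>S. if v = p then h (y v) else 0)"
        unfolding FF_def G'_def by (simp add: sum.distrib)
      also have "(\<Sum>v\<in>S. if v = p then h (y v) else 0) = h (y p)"
        using finS pS' by simp
      finally show ?thesis .
    qed
    have Mrow: "(\<Sum>t\<in>UNIV. M w s t) = 1" for s using st by (simp add: row_stochastic_def)
    have M0: "0 \<le> M w s t" for s t using st by (simp add: row_stochastic_def)
    have decomp: "(\<Sum>x\<in>Om (insert w S). P (insert w S) x * \<phi> x)
        = (\<Sum>y\<in>Om S. P S y * (\<Sum>t\<in>UNIV. M w (y p) t * \<phi> (y(w := t))))" for \<phi>
    proof -
      have "(\<Sum>x\<in>Om (insert w S). P (insert w S) x * \<phi> x)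
          = (\<Sum>y\<in>Om S. \<Sum>t\<in>UNIV. P (insert w S) (y(w := t)) * \<phi> (y(w := t)))"
        by (rule sum_Om_insert[OF wS finS])
      also have "\<dots> = (\<Sum>y\<in>Om S. \<Sum>t\<in>UNIV. P S y * (M w (y p) t * \<phi> (y(w := t))))"
        by (simp only: P_insert[OF cS wS wsub pS] p_def mult.assoc)
      also have "\<dots> = (\<Sum>y\<in>Om S. P S y * (\<Sum>t\<in>UNIV. M w (y p) t * \<phi> (y(w := t))))"
        by (simp only: sum_distrib_left)
      finally show ?thesis .
    qed
    have FFi: "FF G (insert w S) (y(w := t)) = FF G S y + G w t" for y t
      by (rule FF_insert[OF wS finS])
    have inner: "(\<Sum>t\<in>UNIV. M w s t * (a + G w t)) = a + h s" for s a
      by (simp add: distrib_left sum.distrib sum_distrib_right[symmetric] Mrow h_def)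
    have EE: "Ex (insert w S) G = Ex S G'"
      unfolding Ex_def decomp FFi inner FF' by simp
    define mu where "mu = Ex S G'"
    have "Var (insert w S) G = (\<Sum>y\<in>Om S. P S y * (\<Sum>t\<in>UNIV. M w (y p) t * (FF G S y + G w t - mu)\<^sup>2))"
      unfolding Var_def decomp FFi EE mu_def ..
    also have "\<dots> \<le> (\<Sum>y\<in>Om S. P S y * ((FF G S y + h (y p) - mu)\<^sup>2 + (D lam w)\<^sup>2))"
    proof (rule sum_mono, rule mult_left_mono)
      fix y
      show "(\<Sum>t\<in>UNIV. M w (y p) t * (FF G S y + G w t - mu)\<^sup>2) \<le> (FF G S y + h (y p) - mu)\<^sup>2 + (D lam w)\<^sup>2"
        unfolding h_def by (rule var_step[OF Mrow M0 oscw])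
      show "0 \<le> P S y" by (rule P_nonneg[OF cS])
    qed
    also have "\<dots> = Var S G' + (D lam w)\<^sup>2 * (\<Sum>y\<in>Om S. P S y)"
      unfolding Var_def mu_def FF'
      by (simp add: distrib_left sum.distrib sum_distrib_right mult.commute)
    also have "\<dots> = Var S G' + (D lam w)\<^sup>2" using P_sum[OF cS] by simp
    also have "\<dots> \<le> (\<Sum>v\<in>S - {u}. (D lam v)\<^sup>2) + (D lam w)\<^sup>2" using IH' by simp
    also have "\<dots> = (\<Sum>v\<in>insert w S - {u}. (D lam v)\<^sup>2)"
    proof -
      have "insert w S - {u} = insert w (S - {u})" using wu by auto
      thus ?thesis using finS wS by simp
    qed
    finally show "Var (insert w S) G \<le> (\<Sum>v\<in>insert w S - {u}. (D lam v)\<^sup>2)" .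
  qed
qed

end



theorem mainTheorem5:
  fixes V :: "'v set" and r :: 'v and par :: "'v \<Rightarrow> 'v"
    and M :: "'v \<Rightarrow> 's::finite \<Rightarrow> 's \<Rightarrow> real" and lam :: real and A :: "'s set"
    and u :: 'v and b :: 's
  assumes "rooted_tree V r par"
    and "\<forall>v\<in>V - {r}. row_stochastic (M v)"
    and "0 < lam" and "lam < 1"
    and "\<forall>v\<in>V - {r}. mnorm_le (M v) lam"
    and "u \<in> V"
  shows "measure_pmf.variance (mrf_pmf V r par M u b) (Zcount V r par A u)
           \<le> 1/2 * (\<Sum>v\<in>subtree V r par u - {u}. (Delta V r par lam v)^2)"
proof -
  interpret m: mrf V r par M lam u b
    using assms by (simp add: mrf_def mrf_axioms_def tr_def)
  define T where "T = subtree V r par u"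
  define L where "L = leaves V r par u"
  have LT: "L \<subseteq> T" unfolding L_def T_def leaves_def by auto
  have uT: "u \<in> T" using assms(6) unfolding T_def subtree_def by auto
  have cT: "m.closed T"
    unfolding m.closed_def
  proof (intro conjI ballI)
    show "u \<in> T" by fact
    show "T \<subseteq> subtree V r par u" by (simp add: T_def)
    fix w assume w: "w \<in> T - {u}"
    then have wnr: "w \<in> V - {r}" unfolding T_def by (intro m.sub_not_r) auto
    have "(w, u) \<in> m.R\<^sup>*" using w unfolding T_def subtree_def by auto
    then have "(par w, u) \<in> m.R\<^sup>*"
    proof (rule converse_rtranclE)
      assume "w = u" thus ?thesis using w by simp
    next
      fix y assume "(w, y) \<in> m.R" "(y, u) \<in> m.R\<^sup>*"
      thus ?thesis by (simp add: m.R_iff)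
    qed
    moreover have "par w \<in> V" using m.parV wnr by blast
    ultimately show "par w \<in> T" unfolding T_def subtree_def by simp
  qed
  have finT: "finite T" by (rule m.closed_fin[OF cT])
  have finOm: "finite (m.Om T)" unfolding m.Om_def using finT by (simp add: finite_PiE)
  define dens where "dens = mrf_density V r par M u b"
  have dens_eq: "dens x = (if x \<in> m.Om T then m.P T x else 0)" for x
    unfolding dens_def mrf_density_def m.Om_def m.P_def T_def[symmetric]
    by (auto simp: PiE_def extensional_def)
  have dens0: "0 \<le> dens x" for x
    unfolding dens_eq using m.P_nonneg[OF cT] by simp
  have prob: "(\<integral>\<^sup>+x. ennreal (dens x) \<partial>count_space UNIV) = 1"
  proof -
    have "(\<integral>\<^sup>+x. ennreal (dens x) \<partial>count_space UNIV) = (\<Sum>x\<in>m.Om T. ennreal (dens x))"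
      by (rule nn_integral_count_space'[OF finOm]) (auto simp: dens_eq)
    also have "\<dots> = ennreal (\<Sum>x\<in>m.Om T. dens x)" using dens0 by simp
    also have "(\<Sum>x\<in>m.Om T. dens x) = 1" using m.P_sum[OF cT] by (simp add: dens_eq)
    finally show ?thesis by simp
  qed
  have pmf_eq: "pmf (mrf_pmf V r par M u b) x = dens x" for x
    unfolding mrf_pmf_def dens_def[symmetric] using pmf_embed_pmf[OF dens0 prob] .
  define G :: "'v \<Rightarrow> 's \<Rightarrow> real" where "G v s = (if v \<in> L \<and> s \<in> A then 1 else 0)" for v s
  have Z_eq: "Zcount V r par A u x = m.FF G T x" for x
  proof -
    have "{l \<in> L. x l \<in> A} = {v \<in> T. v \<in> L \<and> x v \<in> A}" using LT by auto
    then have "Zcount V r par A u x = (\<Sum>v\<in>{v \<in> T. v \<in> L \<and> x v \<in> A}. 1)"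
      unfolding Zcount_def L_def[symmetric] by simp
    also have "\<dots> = (\<Sum>v\<in>T. if v \<in> L \<and> x v \<in> A then 1 else 0)"
      by (rule sum.inter_filter[OF finT])
    finally show ?thesis unfolding m.FF_def G_def .
  qed
  have integ: "measure_pmf.expectation (mrf_pmf V r par M u b) f = (\<Sum>x\<in>m.Om T. m.P T x * f x)"
    for f :: "('v \<Rightarrow> 's) \<Rightarrow> real"
  proof -
    have "measure_pmf.expectation (mrf_pmf V r par M u b) f
        = (\<Sum>x\<in>m.Om T. pmf (mrf_pmf V r par M u b) x *\<^sub>R f x)"
    proof (rule integral_measure_pmf[OF finOm])
      fix a assume "a \<in> set_pmf (mrf_pmf V r par M u b)"
      then have "pmf (mrf_pmf V r par M u b) a \<noteq> 0" by (simp add: set_pmf_iff)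
      thus "a \<in> m.Om T" unfolding pmf_eq dens_eq by (auto split: if_splits)
    qed
    also have "\<dots> = (\<Sum>x\<in>m.Om T. m.P T x * f x)"
      by (intro sum.cong) (auto simp: pmf_eq dens_eq)
    finally show ?thesis .
  qed
  have var_eq: "measure_pmf.variance (mrf_pmf V r par M u b) (Zcount V r par A u) = m.Var T G"
    unfolding integ m.Var_def m.Ex_def Z_eq ..
  have osc: "\<forall>w\<in>T. oscle (G w) (m.K T w)"
  proof
    fix w assume wT: "w \<in> T"
    have wV: "w \<in> V" using wT unfolding T_def subtree_def by auto
    have Csub: "{c \<in> T - {u}. par c = w} \<subseteq> {c \<in> V - {r}. par c = w}"
      using m.sub_not_r unfolding T_def by blast
    show "oscle (G w) (m.K T w)"
    proof (cases "w \<in> L")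
      case True
      have e: "{c \<in> T - {u}. par c = w} = {}"
        using Csub True unfolding L_def leaves_def by blast
      have "m.K T w = m.D lam w" unfolding m.K_def e by simp
      moreover have "1 \<le> m.D lam w" using True m.lam0 unfolding L_def by (rule m.D_leaf)
      moreover have "oscle (G w) 1" unfolding oscle_def G_def by auto
      ultimately show ?thesis using oscle_mono by metis
    next
      case False
      have "lam * (\<Sum>c\<in>{c \<in> T - {u}. par c = w}. m.D lam c) \<le> m.D lam w"
        by (rule m.D_children[OF m.lam0 m.lam1 wV Csub])
      then have "0 \<le> m.K T w" unfolding m.K_def by simp
      moreover have "G w = (\<lambda>s. 0)" using False by (simp add: G_def fun_eq_iff)
      ultimately show ?thesis unfolding oscle_def by simp
    qed
  qed
  have "m.Var T G \<le> (\<Sum>v\<in>T - {u}. (m.D lam v)\<^sup>2)"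
    using m.var_bound[OF cT] osc by blast
  also have "\<dots> \<le> 1/2 * (\<Sum>v\<in>T - {u}. (Delta V r par lam v)^2)"
  proof -
    have "(\<Sum>v\<in>T - {u}. (m.D lam v)\<^sup>2) \<le> (\<Sum>v\<in>T - {u}. 1/2 * (Delta V r par lam v)^2)"
    proof (rule sum_mono)
      fix v
      have "Delta V r par lam v = 2 * m.D lam v" by (simp add: Delta_def m.D_def)
      thus "(m.D lam v)\<^sup>2 \<le> 1/2 * (Delta V r par lam v)^2" by (simp add: power2_eq_square)
    qed
    thus ?thesis by (simp add: sum_distrib_left)
  qed
  finally show ?thesis unfolding var_eq T_def .
qed



end
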